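(* Let $G$ be a locally compact group with Haar measure $\nu$, and let $U$ be an open symmetric relatively compact neighborhood of the identity. Let $C\subseteq G$ be a regular compact set with interior $C_0$, and suppose $C_0$ is $U$-connected. If $A\subseteq G$ satisfies $A\cap C_0\neq\emptyset$ and $C\setminus\overline A\neq\emptyset$, then $\nu(\overline A\cap C)<\nu(AU\cap C)$.
   Context: A compact set is regular if it equals the closure of its interior. $\overline A$ is the closure of $A$. A set $S\subseteq G$ is $U$-disconnected if there is $A\subseteq S$ with $A\neq\emptyset$, $A\neq S$ and $AU\cap S=A$; otherwise $S$ is $U$-connected. *)

theory Defs
  imports "HOL-Analysis.Analysis"
begin

text \<open>The group is written additively (class group_add, not assumed commutative):
  the group product g h is g + h, the identity is 0, inverses are uminus.\<close>

definition setprod :: "'a::plus set \<Rightarrow> 'a set \<Rightarrow> 'a set" where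
  "setprod A U = {a + u | a u. a \<in> A \<and> u \<in> U}"

definition U_disconnected :: "'a::plus set \<Rightarrow> 'a set \<Rightarrow> bool" where
  "U_disconnected U S \<longleftrightarrow>
     (\<exists>A. A \<subseteq> S \<and> A \<noteq> {} \<and> A \<noteq> S \<and> setprod A U \<inter> S = A)"

definition U_connected :: "'a::plus set \<Rightarrow> 'a set \<Rightarrow> bool" where
  "U_connected U S \<longleftrightarrow> \<not> U_disconnected U S"

definition regular_compact :: "'a::topological_space set \<Rightarrow> bool" where
  "regular_compact C \<longleftrightarrow> compact C \<and> C = closure (interior C)"

definition haar_measure :: "'a::{topological_group_add} measure \<Rightarrow> bool" where
  "haar_measure \<nu> \<longleftrightarrow>
     sets \<nu> = sets borel \<and>
     (\<forall>g B. B \<in> sets borel \<longrightarrow> emeasure \<nu> ((\<lambda>x. g + x) ` B) = emeasure \<nu> B) \<and>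
     (\<forall>K. compact K \<longrightarrow> emeasure \<nu> K < \<infinity>) \<and>
     (\<forall>B \<in> sets borel. emeasure \<nu> B = (INF V \<in> {V. open V \<and> B \<subseteq> V}. emeasure \<nu> V)) \<and>
     (\<forall>V. open V \<longrightarrow> emeasure \<nu> V = (SUP K \<in> {K. compact K \<and> K \<subseteq> V}. emeasure \<nu> K)) \<and>
     emeasure \<nu> (space \<nu>) \<noteq> 0"

end

theory Submission
  imports Defs
begin

lemma transl_eq:
  fixes S :: "'a::group_add set"
  shows "(\<lambda>x. g + x) ` S = (\<lambda>x. - g + x) -` S"
proof
  show "(\<lambda>x. g + x) ` S \<subseteq> (\<lambda>x. - g + x) -` S" by auto
  show "(\<lambda>x. - g + x) -` S \<subseteq> (\<lambda>x. g + x) ` S"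
  proof
    fix x assume "x \<in> (\<lambda>x. - g + x) -` S"
    hence "- g + x \<in> S" by simp
    moreover have "x = g + (- g + x)" by simp
    ultimately show "x \<in> (\<lambda>x. g + x) ` S" by (rule rev_image_eqI)
  qed
qed

lemma transl_open:
  fixes S :: "'a::topological_group_add set"
  assumes "open S"
  shows "open ((\<lambda>x. g + x) ` S)"
  unfolding transl_eq by (intro open_vimage assms continuous_intros)

lemma setprod_open:
  fixes U :: "'a::topological_group_add set"
  assumes "open U"
  shows "open (setprod A U)"
proof -
  have "setprod A U = (\<Union>a\<in>A. (\<lambda>x. a + x) ` U)"
    unfolding setprod_def by blast
  thus ?thesis using transl_open[OF assms] by auto
qed

lemma closure_sub_setprod:
  fixes U :: "'a::topological_group_add set"
  assumes "open U" "uminus ` U = U" "0 \<in> U" "x \<in> closure A"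
  shows "x \<in> setprod A U"
proof -
  have "open ((\<lambda>z. x + z) ` U)" using transl_open assms(1) by blast
  moreover have "x \<in> (\<lambda>z. x + z) ` U" using assms(3) by force
  moreover have H: "\<forall>B. \<forall>S\<subseteq>B. open S \<longrightarrow> x \<in> S \<longrightarrow> A \<inter> B \<noteq> {}"
    by (rule iffD1[OF closure_iff_nhds_not_empty assms(4)])
  ultimately have "A \<inter> (\<lambda>z. x + z) ` U \<noteq> {}"
    using H[rule_format, OF order_refl] by blast
  then obtain u where u: "u \<in> U" "x + u \<in> A" by blast
  have "- u \<in> U" using u(1) assms(2) by force
  moreover have "x = (x + u) + - u" by (simp add: add.assoc)
  ultimately show ?thesis unfolding setprod_def using u(2) by blast
qed

lemma closure_transl_right:
  fixes A :: "'a::topological_group_add set"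
  shows "(\<lambda>z. z + u) ` closure A \<subseteq> closure ((\<lambda>z. z + u) ` A)"
  by (rule image_closure_subset) (intro continuous_intros, simp, intro image_mono closure_subset)

lemma haar_parts:
  assumes "haar_measure \<nu>"
  shows "sets \<nu> = sets borel"
    and "\<And>g B. B \<in> sets borel \<Longrightarrow> emeasure \<nu> ((\<lambda>x. g + x) ` B) = emeasure \<nu> B"
    and "\<And>K. compact K \<Longrightarrow> emeasure \<nu> K < \<infinity>"
    and "\<And>V. open V \<Longrightarrow> emeasure \<nu> V = (SUP K \<in> {K. compact K \<and> K \<subseteq> V}. emeasure \<nu> K)"
    and "emeasure \<nu> (space \<nu>) \<noteq> 0"
proof -
  note h = assms[unfolded haar_measure_def]
  show "sets \<nu> = sets borel" using h by (rule conjunct1)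
  show "\<And>g B. B \<in> sets borel \<Longrightarrow> emeasure \<nu> ((\<lambda>x. g + x) ` B) = emeasure \<nu> B"
    using h[THEN conjunct2, THEN conjunct1] by blast
  show "\<And>K. compact K \<Longrightarrow> emeasure \<nu> K < \<infinity>"
    using h[THEN conjunct2, THEN conjunct2, THEN conjunct1] by blast
  show "\<And>V. open V \<Longrightarrow> emeasure \<nu> V = (SUP K \<in> {K. compact K \<and> K \<subseteq> V}. emeasure \<nu> K)"
    using h[THEN conjunct2, THEN conjunct2, THEN conjunct2, THEN conjunct2, THEN conjunct1] by blast
  show "emeasure \<nu> (space \<nu>) \<noteq> 0"
    using h[THEN conjunct2, THEN conjunct2, THEN conjunct2, THEN conjunct2, THEN conjunct2] .
qed

lemma haar_open_pos:
  fixes \<nu> :: "'a::{topological_group_add, t2_space} measure"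
  assumes h: "haar_measure \<nu>" and W: "open W" "W \<noteq> {}"
  shows "emeasure \<nu> W > 0"
proof (rule ccontr)
  assume "\<not> emeasure \<nu> W > 0"
  hence W0: "emeasure \<nu> W = 0" by (simp add: not_gr_zero)
  have sets: "sets \<nu> = sets borel" using haar_parts(1)[OF h] .
  have sp: "space \<nu> = UNIV" using sets_eq_imp_space_eq[OF sets] by simp
  note inv = haar_parts(2)[OF h]
  have "emeasure \<nu> UNIV = (SUP K \<in> {K. compact K \<and> K \<subseteq> UNIV}. emeasure \<nu> K)"
    using haar_parts(4)[OF h, of UNIV] by simp
  moreover have "emeasure \<nu> UNIV \<noteq> 0" using haar_parts(5)[OF h] sp by simp
  ultimately have "(SUP K \<in> {K. compact K \<and> K \<subseteq> UNIV}. emeasure \<nu> K) \<noteq> bot"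
    by (simp add: bot_ennreal)
  hence "\<not> (\<forall>K\<in>{K. compact K \<and> K \<subseteq> UNIV}. emeasure \<nu> K = bot)"
    unfolding SUP_bot_conv(1) .
  then obtain K where K: "compact K" "emeasure \<nu> K \<noteq> 0"
    by (auto simp: bot_ennreal)
  obtain w where w: "w \<in> W" using W by blast
  have cov: "K \<subseteq> (\<Union>k\<in>K. (\<lambda>x. (k + - w) + x) ` W)"
  proof
    fix k assume "k \<in> K"
    moreover have "k = (k + - w) + w" by (simp add: add.assoc)
    ultimately show "k \<in> (\<Union>k\<in>K. (\<lambda>x. (k + - w) + x) ` W)" using w by blast
  qed
  obtain F where F: "F \<subseteq> K" "finite F" "K \<subseteq> (\<Union>k\<in>F. (\<lambda>x. (k + - w) + x) ` W)"
    by (rule compactE_image[OF K(1) _ cov]) (rule transl_open[OF W(1)])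
  have "\<And>k. (\<lambda>x. (k + - w) + x) ` W \<in> null_sets \<nu>"
  proof -
    fix k
    have "W \<in> sets borel" using W(1) by simp
    moreover have "(\<lambda>x. (k + - w) + x) ` W \<in> sets borel"
      using transl_open[OF W(1)] by simp
    ultimately show "(\<lambda>x. (k + - w) + x) ` W \<in> null_sets \<nu>"
      using inv W0 sets by (simp add: null_sets_def)
  qed
  hence "(\<Union>k\<in>F. (\<lambda>x. (k + - w) + x) ` W) \<in> null_sets \<nu>"
    using F(2) by (intro null_sets.finite_UN) auto
  moreover have "K \<in> sets \<nu>" using K(1) sets by (simp add: compact_imp_closed)
  ultimately have "K \<in> null_sets \<nu>" using F(3) by (rule null_sets_subset)
  hence "emeasure \<nu> K = 0" by (rule null_setsD1)
  thus False using K(2) by simp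
qed

theorem lemma8:
  fixes \<nu> :: "'a::{topological_group_add, t2_space} measure"
    and U C A :: "'a set"
  assumes "locally_compact_space (euclidean :: 'a topology)"
    and "haar_measure \<nu>"
    and "open U" and "uminus ` U = U" and "compact (closure U)" and "0 \<in> U"
    and "regular_compact C"
    and "U_connected U (interior C)"
    and "A \<inter> interior C \<noteq> {}"
    and "C - closure A \<noteq> {}"
  shows "emeasure \<nu> (closure A \<inter> C) < emeasure \<nu> (setprod A U \<inter> C)"
proof -
  define C0 where "C0 = interior C"
  define P where "P = setprod A U"
  have Popen: "open P" unfolding P_def using setprod_open assms(3) by blast
  have clP: "closure A \<subseteq> P" unfolding P_def using closure_sub_setprod assms(3,4,6) by blast
  have AP: "A \<subseteq> P" using clP closure_subset by blast
  have Ccomp: "compact C" and Creg: "C = closure C0"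
    using assms(7) unfolding regular_compact_def C0_def by auto
  have sets: "sets \<nu> = sets borel" using haar_parts(1)[OF assms(2)] .
  define W where "W = P \<inter> C0 - closure A"
  have Wopen: "open W" unfolding W_def C0_def using Popen by auto
  have Wne: "W \<noteq> {}"
  proof
    assume W0: "W = {}"
    define X where "X = closure A \<inter> C0"
    have XP: "X = P \<inter> C0" using W0 clP unfolding W_def X_def by blast
    have Xsub: "X \<subseteq> C0" unfolding X_def by blast
    have Xne: "X \<noteq> {}" using assms(9) closure_subset unfolding X_def C0_def by blast
    have XnC: "X \<noteq> C0"
    proof
      assume XC: "X = C0"
      obtain c where c: "c \<in> C" "c \<notin> closure A" using assms(10) by blast
      have "c \<in> closure C0" using c Creg by simp
      moreover have H: "\<forall>B. \<forall>S\<subseteq>B. open S \<longrightarrow> c \<in> S \<longrightarrow> C0 \<inter> B \<noteq> {}"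
        by (rule iffD1[OF closure_iff_nhds_not_empty]) fact
      ultimately have "C0 \<inter> (- closure A) \<noteq> {}"
        using c(2) H[rule_format, OF order_refl, of "- closure A"] by blast
      thus False using XC unfolding X_def by blast
    qed
    have "setprod X U \<inter> C0 = X"
    proof
      show "X \<subseteq> setprod X U \<inter> C0"
      proof
        fix x assume "x \<in> X"
        moreover have "x = x + 0" by simp
        ultimately show "x \<in> setprod X U \<inter> C0" unfolding setprod_def
          using assms(6) Xsub by blast
      qed
    next
      have "setprod X U \<subseteq> closure P"
      proof
        fix y assume "y \<in> setprod X U"
        then obtain x u where xu: "x \<in> X" "u \<in> U" "y = x + u" unfolding setprod_def by blast
        have "x \<in> closure A" using xu(1) unfolding X_def by blast
        hence "y \<in> closure ((\<lambda>z. z + u) ` A)" using closure_transl_right[of u A] xu(3) by blast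
        moreover have "(\<lambda>z. z + u) ` A \<subseteq> P" unfolding P_def setprod_def using xu(2) by blast
        ultimately show "y \<in> closure P" using closure_mono by blast
      qed
      hence "setprod X U \<inter> C0 \<subseteq> C0 \<inter> closure P" by blast
      also have "\<dots> \<subseteq> closure (C0 \<inter> P)" using open_Int_closure_subset[of C0 P] unfolding C0_def by simp
      also have "\<dots> = closure X" using XP by (simp add: Int_commute)
      also have "\<dots> \<subseteq> closure A" unfolding X_def by (simp add: closure_minimal)
      finally show "setprod X U \<inter> C0 \<subseteq> X" unfolding X_def by blast
    qed
    hence "U_disconnected U C0" unfolding U_disconnected_def using Xsub Xne XnC by blast
    thus False using assms(8) unfolding U_connected_def C0_def by blast
  qed
  have Wpos: "emeasure \<nu> W > 0" using haar_open_pos[OF assms(2) Wopen Wne] .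
  have M1: "closure A \<inter> C \<in> sets \<nu>" using sets Ccomp by (simp add: compact_imp_closed)
  have M2: "W \<in> sets \<nu>" using sets Wopen by simp
  have M3: "P \<inter> C \<in> sets \<nu>" using sets Ccomp Popen by (simp add: compact_imp_closed)
  have fin: "emeasure \<nu> (closure A \<inter> C) < \<infinity>"
  proof -
    have "emeasure \<nu> (closure A \<inter> C) \<le> emeasure \<nu> C"
      using sets Ccomp by (intro emeasure_mono) (auto simp: compact_imp_closed)
    also have "\<dots> < \<infinity>" using haar_parts(3)[OF assms(2) Ccomp] .
    finally show ?thesis .
  qed
  have WC: "W \<subseteq> C" unfolding W_def C0_def using interior_subset by blast
  have "emeasure \<nu> (closure A \<inter> C) < emeasure \<nu> (closure A \<inter> C) + emeasure \<nu> W"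
    using ennreal_add_left_cancel_less[of "emeasure \<nu> (closure A \<inter> C)" 0 "emeasure \<nu> W"] fin Wpos
    by simp
  also have "\<dots> = emeasure \<nu> ((closure A \<inter> C) \<union> W)"
    using M1 M2 by (intro plus_emeasure) (auto simp: W_def)
  also have "\<dots> \<le> emeasure \<nu> (P \<inter> C)"
    using M3 clP WC by (intro emeasure_mono) (auto simp: W_def)
  finally show ?thesis unfolding P_def .
qed

end
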